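(* Let $G=(S,R,\rho)$ be a $q$-linear grammar and $D$ its $q$-derivative. Then for all $n\ge1$ and $f,g\in\mathbb{E}$, \[ D^n(fg)=\sum_{k=0}^n{n\brack k}_q\,D^k(f)\,\uparrow^k\!\big(D^{n-k}(g)\big). \]
   Context: $\mathbb{K}$ is a commutative ring with unity and characteristic zero, $q$ an indeterminate. For a set $S$ of master variables, $\mathbb{S}=\{s_i:s\in S,\ i\ge0\}$ is a set of non-commuting variables, $F(\mathbb{S})$ the free group on $\mathbb{S}$, $\mathbb{E}=\mathbb{K}[q][F(\mathbb{S})]$ its group algebra. A rule $R$ assigns to each $s_i$ an element $R(s_i)\in\mathbb{E}$, extended by $R(s_i^{-1})=-s_i^{-1}R(s_i)s_{i+1}^{-1}$. The up-arrow $\uparrow:\mathbb{E}\to\mathbb{E}$ is the $\mathbb{K}[q]$-linear map replacing each letter $s_i^{\pm1}$ of a word by $s_{i+1}^{\pm1}$, and $\uparrow^k$ is its $k$-th iterate. An order is a map rewriting each word by permuting its letters (extended linearly); KSO is the identity. A $q$-grammar is a triple $(S,R,\rho)$ with $\rho$ an order; its $q$-derivative is the $\mathbb{K}[q]$-linear map with $D(w_1\cdots w_n)=\sum_{j=1}^n\rho\big(w_1\cdots w_{j-1}R(w_j)\uparrow(w_{j+1}\cdots w_n)\big)$ for letters $w_j\in\mathbb{S}\cup\mathbb{S}^{-1}$, $D^0=\mathrm{id}$, $D^k=D\circ D^{k-1}$. A $q$-grammar is $q$-linear if $\rho=\mathrm{KSO}$ and $R(s_{i+1})=q\uparrow R(s_i)$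 for every $s_i\in\mathbb{S}$. ${n\brack k}_q=\frac{(q;q)_n}{(q;q)_k(q;q)_{n-k}}$, $(q;q)_n=\prod_{i=1}^n(1-q^i)$. *)

theory Defs
  imports "HOL-Library.Poly_Mapping" "HOL-Computational_Algebra.Polynomial"
begin

text \<open>Letters of the free group on the variables s_i: (s, i, True) is s_i,
  (s, i, False) is its inverse.  Elements of the free group F(S) are reduced words.\<close>
type_synonym 's letter = "'s \<times> nat \<times> bool"

definition inv_pair :: "'s letter \<Rightarrow> 's letter \<Rightarrow> bool" where
  "inv_pair x y \<longleftrightarrow> fst x = fst y \<and> fst (snd x) = fst (snd y) \<and> snd (snd x) \<noteq> snd (snd y)"

fun reduced :: "'s letter list \<Rightarrow> bool" where
  "reduced (x # y # ys) \<longleftrightarrow> \<not> inv_pair x y \<and> reduced (y # ys)"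
| "reduced _ \<longleftrightarrow> True"

definition red_cons :: "'s letter \<Rightarrow> 's letter list \<Rightarrow> 's letter list" where
  "red_cons x w = (case w of [] \<Rightarrow> [x] | y # ys \<Rightarrow> (if inv_pair x y then ys else x # w))"

definition red :: "'s letter list \<Rightarrow> 's letter list" where
  "red w = foldr red_cons w []"

text \<open>The group algebra E = K[q][F(S)]: finitely supported maps from reduced words to K[q].\<close>
type_synonym ('s, 'k) E = "'s letter list \<Rightarrow>\<^sub>0 'k poly"

definition inE :: "('s, 'k::comm_ring_1) E \<Rightarrow> bool" where
  "inE f \<longleftrightarrow> Poly_Mapping.keys f \<subseteq> {w. reduced w}"

definition multE :: "('s, 'k::comm_ring_1) E \<Rightarrow> ('s, 'k) E \<Rightarrow> ('s, 'k) E" where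
  "multE f g = (\<Sum>u\<in>Poly_Mapping.keys f. \<Sum>v\<in>Poly_Mapping.keys g.
      Poly_Mapping.single (red (u @ v)) (Poly_Mapping.lookup f u * Poly_Mapping.lookup g v))"

definition smultE :: "'k::comm_ring_1 poly \<Rightarrow> ('s, 'k) E \<Rightarrow> ('s, 'k) E" where
  "smultE c f = Poly_Mapping.map (\<lambda>a. c * a) f"

definition gen :: "'s letter list \<Rightarrow> ('s, 'k::comm_ring_1) E" where
  "gen w = Poly_Mapping.single (red w) 1"

definition lett :: "'s letter \<Rightarrow> ('s, 'k::comm_ring_1) E" where
  "lett x = gen [x]"

definition linE :: "('s letter list \<Rightarrow> ('s, 'k::comm_ring_1) E) \<Rightarrow> ('s, 'k) E \<Rightarrow> ('s, 'k) E" where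
  "linE \<phi> f = (\<Sum>w\<in>Poly_Mapping.keys f. smultE (Poly_Mapping.lookup f w) (\<phi> w))"

definition up_letter :: "'s letter \<Rightarrow> 's letter" where
  "up_letter x = (fst x, Suc (fst (snd x)), snd (snd x))"

definition upE :: "('s, 'k::comm_ring_1) E \<Rightarrow> ('s, 'k) E" where
  "upE = linE (\<lambda>w. gen (map up_letter w))"

definition R_letter :: "('s \<times> nat \<Rightarrow> ('s, 'k::comm_ring_1) E) \<Rightarrow> 's letter \<Rightarrow> ('s, 'k) E" where
  "R_letter R x = (case x of (s, i, True) \<Rightarrow> R (s, i)
     | (s, i, False) \<Rightarrow> - multE (multE (lett (s, i, False)) (R (s, i))) (lett (s, Suc i, False)))"

definition D_word :: "('s \<times> nat \<Rightarrow> ('s, 'k::comm_ring_1) E) \<Rightarrow> (('s, 'k) E \<Rightarrow> ('s, 'k) E)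
    \<Rightarrow> 's letter list \<Rightarrow> ('s, 'k) E" where
  "D_word R \<rho> w = (\<Sum>j<length w.
      \<rho> (multE (multE (gen (take j w)) (R_letter R (w ! j))) (upE (gen (drop (Suc j) w)))))"

definition qderiv :: "('s \<times> nat \<Rightarrow> ('s, 'k::comm_ring_1) E) \<Rightarrow> (('s, 'k) E \<Rightarrow> ('s, 'k) E)
    \<Rightarrow> ('s, 'k) E \<Rightarrow> ('s, 'k) E" where
  "qderiv R \<rho> = linE (D_word R \<rho>)"

definition qvar :: "'k::comm_ring_1 poly" where
  "qvar = [:0, 1:]"

text \<open>q-linear grammar: order is KSO (identity) and R(s_{i+1}) = q \<up> R(s_i).\<close>
definition q_linear :: "('s \<times> nat \<Rightarrow> ('s, 'k::comm_ring_1) E) \<Rightarrow> (('s, 'k) E \<Rightarrow> ('s, 'k) E) \<Rightarrow> bool" where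
  "q_linear R \<rho> \<longleftrightarrow> \<rho> = id \<and> (\<forall>s i. R (s, Suc i) = smultE qvar (upE (R (s, i))))"

definition qpoch_int :: "nat \<Rightarrow> int poly" where
  "qpoch_int n = (\<Prod>i=1..n. 1 - monom 1 i)"

text \<open>q-binomial coefficient: the exact quotient in Z[q], mapped into K[q].\<close>
definition qbinom :: "nat \<Rightarrow> nat \<Rightarrow> 'k::comm_ring_1 poly" where
  "qbinom n k = map_poly of_int (qpoch_int n div (qpoch_int k * qpoch_int (n - k)))"

end

theory Submission
  imports Defs
begin


lemma lookup_smultE [simp]: "Poly_Mapping.lookup (smultE c f) w = c * Poly_Mapping.lookup f w"
  unfolding smultE_def by (simp add: Poly_Mapping.map.rep_eq when_def)

lemma smultE_add: "smultE c (f + g) = smultE c f + smultE c g"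
  by (rule poly_mapping_eqI) (simp add: lookup_add algebra_simps)
lemma smultE_add_left: "smultE (a + b) f = smultE a f + smultE b f"
  by (rule poly_mapping_eqI) (simp add: lookup_add algebra_simps)
lemma smultE_0 [simp]: "smultE c 0 = 0"
  by (rule poly_mapping_eqI) simp
lemma smultE_0_left [simp]: "smultE 0 f = 0"
  by (rule poly_mapping_eqI) simp
lemma smultE_1 [simp]: "smultE 1 f = f"
  by (rule poly_mapping_eqI) simp
lemma smultE_smultE [simp]: "smultE a (smultE b f) = smultE (a * b) f"
  by (rule poly_mapping_eqI) (simp add: algebra_simps)
lemma smultE_uminus: "smultE c (- f) = - smultE c f"
  by (rule poly_mapping_eqI) simp
lemma smultE_single [simp]: "smultE c (Poly_Mapping.single w a) = Poly_Mapping.single w (c * a)"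
  by (rule poly_mapping_eqI) (simp add: lookup_single when_def)
lemma smultE_sum: "smultE c (sum f I) = (\<Sum>i\<in>I. smultE c (f i))"
  by (induction I rule: infinite_finite_induct) (auto simp: smultE_add)
lemma smultE_sum_left: "smultE (sum a I) f = (\<Sum>i\<in>I. smultE (a i) f)"
  by (induction I rule: infinite_finite_induct) (auto simp: smultE_add_left)

lemma linE_superset:
  assumes "finite K" "Poly_Mapping.keys f \<subseteq> K"
  shows "linE \<phi> f = (\<Sum>w\<in>K. smultE (Poly_Mapping.lookup f w) (\<phi> w))"
  unfolding linE_def using assms
  by (intro sum.mono_neutral_left) (auto simp: in_keys_iff)

lemma linE_add: "linE \<phi> (f + g) = linE \<phi> f + linE \<phi> g"
proof -
  let ?K = "Poly_Mapping.keys f \<union> Poly_Mapping.keys g"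
  have "linE \<phi> (f + g) = (\<Sum>w\<in>?K. smultE (Poly_Mapping.lookup (f+g) w) (\<phi> w))"
    by (rule linE_superset) (auto simp: keys_add)
  also have "\<dots> = (\<Sum>w\<in>?K. smultE (Poly_Mapping.lookup f w) (\<phi> w)) + (\<Sum>w\<in>?K. smultE (Poly_Mapping.lookup g w) (\<phi> w))"
    by (simp add: lookup_add smultE_add_left sum.distrib)
  also have "\<dots> = linE \<phi> f + linE \<phi> g"
    by (subst (1 2) linE_superset[symmetric]) auto
  finally show ?thesis .
qed

lemma linE_smultE: "linE \<phi> (smultE c f) = smultE c (linE \<phi> f)"
proof -
  have "linE \<phi> (smultE c f) = (\<Sum>w\<in>Poly_Mapping.keys f. smultE (Poly_Mapping.lookup (smultE c f) w) (\<phi> w))"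
    by (rule linE_superset) (auto simp: in_keys_iff)
  then show ?thesis by (simp add: linE_def smultE_sum)
qed

lemma linE_single [simp]: "linE \<phi> (Poly_Mapping.single w c) = smultE c (\<phi> w)"
  by (cases "c = 0") (simp_all add: linE_def)

lemma linE_0 [simp]: "linE \<phi> 0 = 0"
  by (simp add: linE_def)

lemma additive_0: fixes L :: "('s,'k::comm_ring_1) E \<Rightarrow> ('t,'k) E"
  assumes "\<And>f g. L (f + g) = L f + L g" shows "L 0 = 0"
proof -
  have "L 0 + 0 = L 0 + L 0" using assms[of 0 0] by simp
  then show ?thesis by (simp only: add_left_cancel)
qed

lemma additive_sum: assumes "\<And>f g. L (f + g) = L f + L g"
  shows "L (sum (h :: _ \<Rightarrow> ('s,'k::comm_ring_1) E) I) = (\<Sum>i\<in>I. (L (h i) :: ('t,'k) E))"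
proof (induction I rule: infinite_finite_induct)
  case (infinite A)
  then show ?case using additive_0[of L] assms by simp
next
  case empty
  then show ?case using additive_0[of L] assms by simp
qed (simp add: assms)

lemma additive_uminus: assumes "\<And>f g. L (f + g) = L f + L g"
  shows "L (- (f::('s,'k::comm_ring_1) E)) = - (L f :: ('t,'k) E)"
proof -
  have "L (-f) + L f = 0" using assms[of "-f" f] additive_0[of L] assms by simp
  then show ?thesis by (simp add: eq_neg_iff_add_eq_0)
qed

lemma poly_mapping_sum_singles:
  "f = (\<Sum>w\<in>Poly_Mapping.keys f. Poly_Mapping.single w (Poly_Mapping.lookup f w))"
proof (rule poly_mapping_eqI)
  fix k
  show "Poly_Mapping.lookup f k = Poly_Mapping.lookup (\<Sum>w\<in>Poly_Mapping.keys f. Poly_Mapping.single w (Poly_Mapping.lookup f w)) k"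
    by (cases "k \<in> Poly_Mapping.keys f")
       (auto simp: lookup_sum lookup_single when_def in_keys_iff sum.delta[OF finite_keys])
qed

lemma ext_lin:
  fixes L L' :: "('s,'k::comm_ring_1) E \<Rightarrow> ('t,'k) E"
  assumes "\<And>f g. L (f + g) = L f + L g" "\<And>f g. L' (f + g) = L' f + L' g"
    and "\<And>w c. P w \<Longrightarrow> L (Poly_Mapping.single w c) = L' (Poly_Mapping.single w c)"
    and "Poly_Mapping.keys f \<subseteq> {w. P w}"
  shows "L f = L' f"
proof -
  have "L f = L (\<Sum>w\<in>Poly_Mapping.keys f. Poly_Mapping.single w (Poly_Mapping.lookup f w))"
    by (subst poly_mapping_sum_singles) rule
  also have "\<dots> = (\<Sum>w\<in>Poly_Mapping.keys f. L (Poly_Mapping.single w (Poly_Mapping.lookup f w)))"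
    by (rule additive_sum[OF assms(1)])
  also have "\<dots> = (\<Sum>w\<in>Poly_Mapping.keys f. L' (Poly_Mapping.single w (Poly_Mapping.lookup f w)))"
    using assms(3,4) by (intro sum.cong) auto
  also have "\<dots> = L' (\<Sum>w\<in>Poly_Mapping.keys f. Poly_Mapping.single w (Poly_Mapping.lookup f w))"
    by (rule additive_sum[OF assms(2), symmetric])
  also have "\<dots> = L' f" by (subst (2) poly_mapping_sum_singles) rule
  finally show ?thesis .
qed



lemma inv_pair_sym: "inv_pair a b \<Longrightarrow> inv_pair b a"
  by (auto simp: inv_pair_def)

lemma inv_pair_same: "inv_pair a b \<Longrightarrow> inv_pair c b \<Longrightarrow> a = c"
  by (cases a; cases b; cases c) (auto simp: inv_pair_def)

lemma reduced_Cons: "reduced (a # w) \<longleftrightarrow> reduced w \<and> (w = [] \<or> \<not> inv_pair a (hd w))"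
  by (cases w) auto

lemma reduced_red_cons: "reduced w \<Longrightarrow> reduced (red_cons a w)"
  by (cases w) (auto simp: red_cons_def reduced_Cons)

lemma reduced_red: "reduced (red w)"
  unfolding red_def by (induction w) (auto intro: reduced_red_cons)

lemma red_cons_reduced: "reduced (a # w) \<Longrightarrow> red_cons a w = a # w"
  by (cases w) (auto simp: red_cons_def)

lemma red_reduced: "reduced w \<Longrightarrow> red w = w"
  unfolding red_def
  by (induction w) (auto simp: reduced_Cons red_cons_reduced)

lemma red_cons_cancel:
  assumes "reduced z" "inv_pair a b"
  shows "red_cons a (red_cons b z) = z"
proof (cases z)
  case Nil
  then show ?thesis using assms by (simp add: red_cons_def)
next
  case (Cons c zs)
  show ?thesis
  proof (cases "inv_pair b c")
    case True
    then have "a = c" using assms(2) inv_pair_sym inv_pair_same by blast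
    then show ?thesis using Cons True assms(1)
      by (cases zs) (auto simp: red_cons_def)
  next
    case False
    then show ?thesis using Cons assms(2) by (simp add: red_cons_def)
  qed
qed

lemma reduced_foldr: "reduced z \<Longrightarrow> reduced (foldr red_cons x z)"
  by (induction x) (auto intro: reduced_red_cons)

lemma foldr_red:
  assumes "reduced z" shows "foldr red_cons x z = foldr red_cons (red x) z"
proof (induction x)
  case Nil
  then show ?case by (simp add: red_def)
next
  case (Cons a x)
  have r: "red (a # x) = red_cons a (red x)" by (simp add: red_def)
  show ?case
  proof (cases "red x")
    case Nil
    then show ?thesis using Cons r by (simp add: red_cons_def[of a "[]"])
  next
    fix b ys assume Cons2: "red x = b # ys"
    show ?thesis
    proof (cases "inv_pair a b")
      case True
      have "foldr red_cons (a # x) z = red_cons a (red_cons b (foldr red_cons ys z))"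
        using Cons.IH Cons2 by simp
      also have "\<dots> = foldr red_cons ys z"
        using True assms by (intro red_cons_cancel reduced_foldr)
      moreover have "red (a # x) = ys" using r Cons2 True by (simp add: red_cons_def)
      ultimately show ?thesis by simp
    next
      case False
      then have "red (a # x) = a # red x" using Cons2 r by (simp add: red_cons_def)
      then show ?thesis using Cons.IH by simp
    qed
  qed
qed

lemma red_append: "red (x @ y) = foldr red_cons x (red y)"
  by (simp add: red_def)

lemma red_red [simp]: "red (red x) = red x"
  by (simp add: red_reduced reduced_red)

lemma red_red_left [simp]: "red (red x @ y) = red (x @ y)"
  by (simp add: red_append foldr_red[OF reduced_red, symmetric])

lemma red_red_right [simp]: "red (x @ red y) = red (x @ y)"
  by (simp add: red_append)

lemma inv_pair_up [simp]: "inv_pair (up_letter a) (up_letter b) = inv_pair a b"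
  by (auto simp: inv_pair_def up_letter_def)

lemma red_cons_up: "red_cons (up_letter a) (map up_letter z) = map up_letter (red_cons a z)"
  by (cases z) (auto simp: red_cons_def)

lemma red_map_up: "red (map up_letter w) = map up_letter (red w)"
  unfolding red_def by (induction w) (auto simp: red_cons_up)

lemma reduced_map_up: "reduced w \<Longrightarrow> reduced (map up_letter w)"
  by (metis red_map_up red_reduced reduced_red)



lemma gen_single: "gen w = Poly_Mapping.single (red w) 1"
  by (simp add: gen_def)

lemma multE_linE_left: "multE f g = linE (\<lambda>u. linE (\<lambda>v. gen (u @ v)) g) f"
  unfolding multE_def linE_def gen_def by (simp add: smultE_sum)

lemma multE_linE_right: "multE f g = linE (\<lambda>v. linE (\<lambda>u. gen (u @ v)) f) g"
  unfolding multE_def linE_def gen_def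
  by (simp add: smultE_sum ac_simps) (rule sum.swap)

lemma multE_add_left: "multE (f + f') g = multE f g + multE f' g"
  by (simp add: multE_linE_left linE_add)
lemma multE_add_right: "multE f (g + g') = multE f g + multE f g'"
  by (simp add: multE_linE_right linE_add)
lemma multE_smult_left: "multE (smultE c f) g = smultE c (multE f g)"
  by (simp add: multE_linE_left linE_smultE)
lemma multE_smult_right: "multE f (smultE c g) = smultE c (multE f g)"
  by (simp add: multE_linE_right linE_smultE)
lemma multE_single_single:
  "multE (Poly_Mapping.single u a) (Poly_Mapping.single v b) = Poly_Mapping.single (red (u @ v)) (a * b)"
  by (simp add: multE_linE_left gen_single)

lemma multE_0_left [simp]: "multE 0 g = 0"
  by (simp add: multE_def)
lemma multE_0_right [simp]: "multE f 0 = 0"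
  by (simp add: multE_def)
lemma multE_uminus_left: "multE (- f) g = - multE f g"
  by (rule additive_uminus) (simp add: multE_add_left)
lemma multE_uminus_right: "multE f (- g) = - multE f g"
  by (rule additive_uminus[where L="multE f"]) (simp add: multE_add_right)
lemma multE_sum_left: "multE (sum h I) g = (\<Sum>i\<in>I. multE (h i) g)"
  by (rule additive_sum[where L="\<lambda>f. multE f g"]) (simp add: multE_add_left)
lemma multE_sum_right: "multE f (sum h I) = (\<Sum>i\<in>I. multE f (h i))"
  by (rule additive_sum[where L="multE f"]) (simp add: multE_add_right)

lemma multE_gen_gen: "multE (gen u) (gen v) = gen (u @ v)"
  by (simp add: gen_single multE_single_single)

lemma multE_assoc: "multE (multE f g) h = multE f (multE g h)"
proof (rule ext_lin[where P="\<lambda>_. True" and f=f])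
  fix u a
  show "multE (multE (Poly_Mapping.single u a) g) h = multE (Poly_Mapping.single u a) (multE g h)"
  proof (rule ext_lin[where P="\<lambda>_. True" and f=g])
    fix v b
    show "multE (multE (Poly_Mapping.single u a) (Poly_Mapping.single v b)) h =
          multE (Poly_Mapping.single u a) (multE (Poly_Mapping.single v b) h)"
    proof (rule ext_lin[where P="\<lambda>_. True" and f=h])
      fix w c
      show "multE (multE (Poly_Mapping.single u a) (Poly_Mapping.single v b)) (Poly_Mapping.single w c) =
          multE (Poly_Mapping.single u a) (multE (Poly_Mapping.single v b) (Poly_Mapping.single w c))"
        by (simp add: multE_single_single ac_simps)
    qed (auto simp: multE_add_left multE_add_right)
  qed (auto simp: multE_add_left multE_add_right)
qed (auto simp: multE_add_left multE_add_right)

lemma inE_0 [simp]: "inE 0" by (simp add: inE_def)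
lemma inE_add [simp]: "inE f \<Longrightarrow> inE g \<Longrightarrow> inE (f + g)"
  unfolding inE_def using keys_add[of f g] by blast
lemma inE_uminus [simp]: "inE f \<Longrightarrow> inE (- f)"
  unfolding inE_def by simp
lemma inE_sum: "(\<And>i. i \<in> I \<Longrightarrow> inE (h i)) \<Longrightarrow> inE (sum h I)"
  by (induction I rule: infinite_finite_induct) auto
lemma keys_smultE: "Poly_Mapping.keys (smultE c f) \<subseteq> Poly_Mapping.keys f"
  by (auto simp: in_keys_iff)
lemma inE_smultE [simp]: "inE f \<Longrightarrow> inE (smultE c f)"
  unfolding inE_def using keys_smultE by blast
lemma inE_single: "reduced w \<Longrightarrow> inE (Poly_Mapping.single w c)"
  unfolding inE_def by simp
lemma inE_gen [simp]: "inE (gen w)"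
  by (simp add: gen_single inE_single reduced_red)
lemma inE_linE: "(\<And>w. inE (\<phi> w)) \<Longrightarrow> inE (linE \<phi> f)"
  unfolding linE_def by (auto intro: inE_sum)
lemma inE_multE [simp]: "inE (multE f g)"
  unfolding multE_def by (auto intro!: inE_sum inE_single reduced_red)

lemma multE_gen_Nil_left: "inE X \<Longrightarrow> multE (gen []) X = X"
  by (rule ext_lin[where P=reduced and L="multE (gen [])" and L'=id, simplified])
     (auto simp: gen_single multE_single_single multE_add_right red_reduced inE_def)

lemma upE_add: "upE (f + g) = upE f + upE g"
  by (simp add: upE_def linE_add)
lemma upE_smult: "upE (smultE c f) = smultE c (upE f)"
  by (simp add: upE_def linE_smultE)
lemma upE_uminus: "upE (- f) = - upE f"
  by (rule additive_uminus) (simp add: upE_add)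
lemma upE_sum: "upE (sum h I) = (\<Sum>i\<in>I. upE (h i))"
  by (rule additive_sum) (simp add: upE_add)
lemma upE_single: "upE (Poly_Mapping.single w c) = smultE c (gen (map up_letter w))"
  by (simp add: upE_def)
lemma upE_gen: "upE (gen w) = gen (map up_letter w)"
  by (simp add: upE_def gen_single red_map_up)
lemma inE_upE [simp]: "inE (upE f)"
  unfolding upE_def by (rule inE_linE) simp

lemma red_map_up_append: "red (map up_letter x @ map up_letter y) = map up_letter (red (x @ y))"
  by (metis map_append red_map_up)

lemma upE_mult: "upE (multE f g) = multE (upE f) (upE g)"
proof (rule ext_lin[where P="\<lambda>_. True" and f=f])
  fix u a
  show "upE (multE (Poly_Mapping.single u a) g) = multE (upE (Poly_Mapping.single u a)) (upE g)"
  proof (rule ext_lin[where P="\<lambda>_. True" and f=g])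
    fix v b
    show "upE (multE (Poly_Mapping.single u a) (Poly_Mapping.single v b)) =
          multE (upE (Poly_Mapping.single u a)) (upE (Poly_Mapping.single v b))"
      by (simp add: multE_single_single upE_single multE_smult_left multE_smult_right
            multE_gen_gen gen_single red_map_up_append red_map_up ac_simps)
  qed (auto simp: multE_add_left multE_add_right upE_add)
qed (auto simp: multE_add_left multE_add_right upE_add)



lemma sum_lessThan_add: "(\<Sum>j<m+n. f j) = (\<Sum>j<m. f j) + (\<Sum>j<n. f (m + j))" for m n :: nat
  by (induction n) (simp_all add: ac_simps)

lemma upE_gen_append: "upE (gen (x @ y)) = multE (upE (gen x)) (upE (gen y))"
  by (metis multE_gen_gen upE_mult)

lemma multE_gen_gen_assoc: "multE (gen x) (multE (gen y) Z) = multE (gen (x @ y)) Z"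
  by (metis multE_assoc multE_gen_gen)

lemma Dw: "D_word R (\<lambda>x. x) w = (\<Sum>j<length w.
      multE (multE (gen (take j w)) (R_letter R (w ! j))) (upE (gen (drop (Suc j) w))))"
  by (simp add: D_word_def)

lemma Dw_Nil [simp]: "D_word R (\<lambda>x. x) [] = 0"
  by (simp add: Dw)

lemma inE_Dw [simp]: "inE (D_word R (\<lambda>x. x) w)"
  by (simp add: Dw inE_sum)

lemma Dw_append: "D_word R (\<lambda>x. x) (u @ v) = multE (D_word R (\<lambda>x. x) u) (upE (gen v)) + multE (gen u) (D_word R (\<lambda>x. x) v)"
proof -
  let ?T = "\<lambda>w j. multE (multE (gen (take j w)) (R_letter R (w ! j))) (upE (gen (drop (Suc j) w)))"
  have "D_word R (\<lambda>x. x) (u @ v) = (\<Sum>j<length u. ?T (u @ v) j) + (\<Sum>j<length v. ?T (u @ v) (length u + j))"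
    by (simp add: Dw sum_lessThan_add)
  also have "(\<Sum>j<length u. ?T (u @ v) j) = (\<Sum>j<length u. multE (?T u j) (upE (gen v)))"
  proof (rule sum.cong)
    fix j assume "j \<in> {..<length u}"
    then have j: "j < length u" by simp
    then have "take j (u @ v) = take j u" "(u @ v) ! j = u ! j" "drop (Suc j) (u @ v) = drop (Suc j) u @ v"
      by (simp_all add: nth_append)
    then show "?T (u @ v) j = multE (?T u j) (upE (gen v))"
      using j by (simp add: upE_gen_append multE_assoc)
  qed simp
  also have "(\<Sum>j<length v. ?T (u @ v) (length u + j)) = (\<Sum>j<length v. multE (gen u) (?T v j))"
  proof (rule sum.cong)
    fix j
    have "take (length u + j) (u @ v) = u @ take j v" by simp
    then show "?T (u @ v) (length u + j) = multE (gen u) (?T v j)"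
      by (simp add: multE_gen_gen[symmetric] multE_assoc del: take_append)
  qed simp
  finally show ?thesis
    unfolding Dw[of R u] Dw[of R v] multE_sum_left multE_sum_right .
qed

lemma gen_cancel: "inv_pair a b \<Longrightarrow> gen (a # b # w) = gen w"
proof -
  assume ab: "inv_pair a b"
  have "red [a, b] = []" using ab by (simp add: red_def red_cons_def)
  then have "red ([a, b] @ w) = red w" by (metis red_red_left append_Nil)
  then show ?thesis by (simp add: gen_single)
qed

lemma Dw_cancel:
  assumes "inv_pair a b" shows "D_word R (\<lambda>x. x) [a, b] = 0"
proof -
  obtain s i t where a: "a = (s, i, t)" by (cases a) auto
  then have b: "b = (s, i, \<not> t)" using assms by (cases b) (auto simp: inv_pair_def)
  have D2: "D_word R (\<lambda>x. x) [a, b] = multE (multE (gen []) (R_letter R a)) (upE (gen [b]))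
       + multE (multE (gen [a]) (R_letter R b)) (upE (gen []))"
    by (simp add: Dw lessThan_Suc)
  show ?thesis
  proof (cases t)
    case True
    have c: "gen ((s, i, True) # (s, i, False) # w) = gen w" for w
      by (rule gen_cancel) (simp add: inv_pair_def)
    show ?thesis unfolding D2 using True a b
      by (simp add: R_letter_def lett_def upE_gen up_letter_def multE_uminus_left multE_uminus_right
          multE_assoc multE_gen_gen_assoc multE_gen_gen c)
  next
    case False
    have c: "gen ((s, i, False) # (s, i, True) # w) = gen w" for w
      by (rule gen_cancel) (simp add: inv_pair_def)
    have c2: "gen ((s, Suc i, False) # (s, Suc i, True) # w) = gen w" for w
      by (rule gen_cancel) (simp add: inv_pair_def)
    show ?thesis unfolding D2 using False a b
      by (simp add: R_letter_def lett_def upE_gen up_letter_def multE_uminus_left multE_uminus_right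
          multE_assoc multE_gen_gen_assoc multE_gen_gen c c2)
  qed
qed



lemma gen_red [simp]: "gen (red w) = gen w"
  by (simp add: gen_single)

lemma Dw_Cons_red: "D_word R (\<lambda>x. x) (a # red w) = D_word R (\<lambda>x. x) (a # w)" if IH: "D_word R (\<lambda>x. x) (red w) = D_word R (\<lambda>x. x) w"
proof -
  have "D_word R (\<lambda>x. x) ([a] @ red w) = D_word R (\<lambda>x. x) ([a] @ w)"
    unfolding Dw_append using IH by simp
  then show ?thesis by simp
qed

lemma Dw_red: "D_word R (\<lambda>x. x) (red w) = D_word R (\<lambda>x. x) w"
proof (induction w)
  case Nil
  then show ?case by (simp add: red_def)
next
  case (Cons a w)
  have r: "red (a # w) = red_cons a (red w)" by (simp add: red_def)
  have e: "D_word R (\<lambda>x. x) (a # red w) = D_word R (\<lambda>x. x) (a # w)" by (rule Dw_Cons_red[OF Cons.IH])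
  show ?case
  proof (cases "red w")
    case Nil
    then show ?thesis using r e by (simp add: red_cons_def)
  next
    fix b ys assume C: "red w = b # ys"
    show ?thesis
    proof (cases "inv_pair a b")
      case True
      then have "red (a # w) = ys" using r C by (simp add: red_cons_def)
      moreover have "D_word R (\<lambda>x. x) ([a, b] @ ys) = D_word R (\<lambda>x. x) ys"
        unfolding Dw_append using True
        by (simp add: Dw_cancel gen_cancel[OF True, of "[]", simplified] multE_gen_Nil_left)
      ultimately show ?thesis using e C by simp
    next
      case False
      then have "red (a # w) = a # red w" using r C by (simp add: red_cons_def)
      then show ?thesis using e by simp
    qed
  qed
qed

lemma qD_def': "qderiv R (\<lambda>x. x) = linE (D_word R (\<lambda>x. x))"
  by (simp add: qderiv_def)

lemma qD_add: "qderiv R (\<lambda>x. x) (f + g) = qderiv R (\<lambda>x. x) f + qderiv R (\<lambda>x. x) g"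
  by (simp add: qD_def' linE_add)
lemma qD_smult: "qderiv R (\<lambda>x. x) (smultE c f) = smultE c (qderiv R (\<lambda>x. x) f)"
  by (simp add: qD_def' linE_smultE)
lemma qD_sum: "qderiv R (\<lambda>x. x) (sum h I) = (\<Sum>i\<in>I. qderiv R (\<lambda>x. x) (h i))"
  by (rule additive_sum) (simp add: qD_add)
lemma qD_single: "qderiv R (\<lambda>x. x) (Poly_Mapping.single w c) = smultE c (D_word R (\<lambda>x. x) w)"
  by (simp add: qD_def')
lemma qD_gen: "qderiv R (\<lambda>x. x) (gen w) = D_word R (\<lambda>x. x) w"
  by (simp add: gen_single qD_single Dw_red)
lemma inE_qD [simp]: "inE (qderiv R (\<lambda>x. x) f)"
  by (simp add: qD_def' inE_linE)

lemma multE_single_left: "multE (Poly_Mapping.single u a) X = smultE a (multE (gen u) X)"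
proof (rule ext_lin[where P="\<lambda>_. True" and f=X])
  fix v b
  show "multE (Poly_Mapping.single u a) (Poly_Mapping.single v b) = smultE a (multE (gen u) (Poly_Mapping.single v b))"
    by (simp add: gen_single multE_single_single)
qed (auto simp: multE_add_right smultE_add)

lemma upE_single': "upE (Poly_Mapping.single v b) = smultE b (upE (gen v))"
  by (simp add: upE_single upE_gen)

lemma leibniz: "qderiv R (\<lambda>x. x) (multE f g) = multE (qderiv R (\<lambda>x. x) f) (upE g) + multE f (qderiv R (\<lambda>x. x) g)"
proof (rule ext_lin[where P="\<lambda>_. True" and f=f])
  fix u a
  show "qderiv R (\<lambda>x. x) (multE (Poly_Mapping.single u a) g) =
    multE (qderiv R (\<lambda>x. x) (Poly_Mapping.single u a)) (upE g) + multE (Poly_Mapping.single u a) (qderiv R (\<lambda>x. x) g)"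
  proof (rule ext_lin[where P="\<lambda>_. True" and f=g])
    fix v b
    have "qderiv R (\<lambda>x. x) (multE (Poly_Mapping.single u a) (Poly_Mapping.single v b)) =
      smultE (a * b) (D_word R (\<lambda>x. x) (u @ v))"
      by (simp add: multE_single_single qD_single Dw_red)
    also have "\<dots> = multE (qderiv R (\<lambda>x. x) (Poly_Mapping.single u a)) (upE (Poly_Mapping.single v b)) +
        multE (Poly_Mapping.single u a) (qderiv R (\<lambda>x. x) (Poly_Mapping.single v b))"
      by (simp add: Dw_append qD_single upE_single' multE_single_left multE_smult_left
          multE_smult_right smultE_add ac_simps)
    finally show "qderiv R (\<lambda>x. x) (multE (Poly_Mapping.single u a) (Poly_Mapping.single v b)) =
        multE (qderiv R (\<lambda>x. x) (Poly_Mapping.single u a)) (upE (Poly_Mapping.single v b)) +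
        multE (Poly_Mapping.single u a) (qderiv R (\<lambda>x. x) (Poly_Mapping.single v b))" .
  qed (auto simp: multE_add_left multE_add_right upE_add qD_add)
qed (auto simp: multE_add_left multE_add_right upE_add qD_add)



context
  fixes R :: "'s \<times> nat \<Rightarrow> ('s, 'k::comm_ring_1) E"
  assumes ql: "\<forall>s i. R (s, Suc i) = smultE qvar (upE (R (s, i)))"
begin

lemma RL_up: "R_letter R (up_letter x) = smultE qvar (upE (R_letter R x))"
proof -
  obtain s i t where x: "x = (s, i, t)" by (cases x) auto
  show ?thesis
    by (cases t) (simp_all add: x R_letter_def up_letter_def ql upE_uminus upE_mult upE_gen lett_def
        multE_smult_left multE_smult_right smultE_uminus)
qed

lemma Dw_up: "D_word R (\<lambda>x. x) (map up_letter w) = smultE qvar (upE (D_word R (\<lambda>x. x) w))"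
  by (simp add: Dw upE_sum smultE_sum take_map drop_map RL_up upE_mult upE_gen
      multE_smult_left multE_smult_right)

lemma qD_up: "qderiv R (\<lambda>x. x) (upE f) = smultE qvar (upE (qderiv R (\<lambda>x. x) f))"
proof (rule ext_lin[where P="\<lambda>_. True" and f=f])
  fix w c
  show "qderiv R (\<lambda>x. x) (upE (Poly_Mapping.single w c)) = smultE qvar (upE (qderiv R (\<lambda>x. x) (Poly_Mapping.single w c)))"
    by (simp add: upE_single qD_smult qD_gen Dw_up qD_single upE_smult ac_simps)
qed (auto simp: upE_add qD_add smultE_add)

lemma qD_upk: "qderiv R (\<lambda>x. x) ((upE ^^ k) f) = smultE (qvar ^ k) ((upE ^^ k) (qderiv R (\<lambda>x. x) f))"
  by (induction k) (simp_all add: qD_up upE_smult ac_simps)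

end



fun gb :: "nat \<Rightarrow> nat \<Rightarrow> int poly" where
  "gb n 0 = 1"
| "gb 0 (Suc k) = 0"
| "gb (Suc n) (Suc k) = gb n k + monom 1 (Suc k) * gb n (Suc k)"

lemma gb_zero: "n < k \<Longrightarrow> gb n k = 0"
proof (induction n arbitrary: k)
  case 0
  then show ?case by (cases k) auto
next
  case (Suc n)
  then show ?case by (cases k) auto
qed

lemma qpoch_0 [simp]: "qpoch_int 0 = 1"
  by (simp add: qpoch_int_def)

lemma qpoch_Suc: "qpoch_int (Suc n) = qpoch_int n * (1 - monom 1 (Suc n))"
  by (simp add: qpoch_int_def prod.nat_ivl_Suc' mult.commute)

lemma one_minus_monom_nz: "0 < i \<Longrightarrow> (1 - monom 1 i :: int poly) \<noteq> 0"
proof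
  assume "0 < i" "(1 - monom 1 i :: int poly) = 0"
  then have "coeff (1 - monom 1 i :: int poly) 0 = 0" by simp
  with \<open>0 < i\<close> show False by (simp add: coeff_monom)
qed

lemma qpoch_nz: "qpoch_int n \<noteq> 0"
proof (induction n)
  case (Suc n)
  have "(1 - monom 1 (Suc n) :: int poly) \<noteq> 0" by (rule one_minus_monom_nz) simp
  then show ?case using Suc by (simp only: qpoch_Suc mult_eq_0_iff) simp
qed simp

lemma gb_prod: "k \<le> n \<Longrightarrow> gb n k * (qpoch_int k * qpoch_int (n - k)) = qpoch_int n"
proof (induction n arbitrary: k)
  case 0
  then show ?case by simp
next
  case (Suc n)
  show ?case
  proof (cases k)
    case 0
    then show ?thesis by simp
  next
    case (Suc k')
    let ?m = "\<lambda>i. monom (1::int) i"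
    have k': "k' \<le> n" using Suc Suc.prems by simp
    have A: "gb n k' * (qpoch_int (Suc k') * qpoch_int (n - k')) = qpoch_int n * (1 - ?m (Suc k'))"
      using Suc.IH[OF k'] by (simp add: qpoch_Suc algebra_simps)
    have B: "?m (Suc k') * gb n (Suc k') * (qpoch_int (Suc k') * qpoch_int (n - k'))
        = qpoch_int n * (?m (Suc k') - ?m (Suc n))"
    proof (cases "k' < n")
      case True
      then have nk: "n - k' = Suc (n - Suc k')" by simp
      have "?m (Suc k') * gb n (Suc k') * (qpoch_int (Suc k') * qpoch_int (n - k'))
          = ?m (Suc k') * (gb n (Suc k') * (qpoch_int (Suc k') * qpoch_int (n - Suc k'))) * (1 - ?m (n - k'))"
        by (simp add: nk qpoch_Suc algebra_simps)
      also have "\<dots> = ?m (Suc k') * qpoch_int n * (1 - ?m (n - k'))"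
        using Suc.IH[of "Suc k'"] True by simp
      also have "\<dots> = qpoch_int n * (?m (Suc k') - ?m (Suc k') * ?m (n - k'))"
        by (simp add: algebra_simps)
      also have "?m (Suc k') * ?m (n - k') = ?m (Suc n)"
        using True by (simp add: mult_monom)
      finally show ?thesis .
    next
      case False
      then have "k' = n" using k' by simp
      then show ?thesis by (simp add: gb_zero)
    qed
    have "gb (Suc n) k * (qpoch_int k * qpoch_int (Suc n - k)) =
        gb n k' * (qpoch_int (Suc k') * qpoch_int (n - k')) +
        ?m (Suc k') * gb n (Suc k') * (qpoch_int (Suc k') * qpoch_int (n - k'))"
      by (simp add: Suc algebra_simps)
    also have "\<dots> = qpoch_int n * (1 - ?m (Suc n))"
      unfolding A B by (simp add: algebra_simps)
    also have "\<dots> = qpoch_int (Suc n)" by (simp add: qpoch_Suc)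
    finally show ?thesis .
  qed
qed

lemma qbinom_gb: "k \<le> n \<Longrightarrow> qbinom n k = map_poly of_int (gb n k)"
proof -
  assume "k \<le> n"
  then have "qpoch_int n div (qpoch_int k * qpoch_int (n - k)) = gb n k"
    using gb_prod[of k n] qpoch_nz
    by (metis nonzero_mult_div_cancel_right mult_eq_0_iff)
  then show ?thesis by (simp add: qbinom_def)
qed

lemma map_poly_of_int_add: "map_poly of_int (p + q) = (map_poly of_int p + map_poly of_int q :: 'k::comm_ring_1 poly)"
  by (rule poly_eqI) (simp add: coeff_map_poly)

lemma map_poly_of_int_monom_mult: "map_poly of_int (monom 1 k * p) = (monom 1 k * map_poly of_int p :: 'k::comm_ring_1 poly)"
  by (rule poly_eqI) (simp add: coeff_map_poly coeff_monom_mult)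

lemma qvar_pow: "qvar ^ k = monom 1 k"
  by (simp add: qvar_def monom_altdef)

lemma qbinom_0: "qbinom n 0 = 1"
  by (simp add: qbinom_gb)

lemma qbinom_nn: "qbinom n n = 1"
proof -
  have "gb n n = 1" by (induction n) (simp_all add: gb_zero)
  then show ?thesis by (simp add: qbinom_gb)
qed

lemma qbinom_rec: "1 \<le> k \<Longrightarrow> k \<le> n \<Longrightarrow>
   (qbinom (Suc n) k :: 'k::comm_ring_1 poly) = qbinom n (k - 1) + qvar ^ k * qbinom n k"
proof -
  assume "1 \<le> k" "k \<le> n"
  then obtain k' where k: "k = Suc k'" by (cases k) auto
  show ?thesis unfolding qvar_pow using \<open>k \<le> n\<close>
    by (simp add: k qbinom_gb map_poly_of_int_add map_poly_of_int_monom_mult qvar_pow)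
qed



lemma main_qleibniz:
  fixes R :: "'s \<times> nat \<Rightarrow> ('s, 'k::comm_ring_1) E"
  assumes ql: "\<forall>s i. R (s, Suc i) = smultE qvar (upE (R (s, i)))"
  shows "(qderiv R (\<lambda>x. x) ^^ n) (multE f g) =
    (\<Sum>k\<le>n. smultE (qbinom n k)
       (multE ((qderiv R (\<lambda>x. x) ^^ k) f) ((upE ^^ k) ((qderiv R (\<lambda>x. x) ^^ (n - k)) g))))"
proof (induction n)
  case 0
  then show ?case by (simp add: qbinom_0)
next
  case (Suc n)
  let ?D = "qderiv R (\<lambda>x. x)"
  define T where "T k = multE ((?D ^^ k) f) ((upE ^^ k) ((?D ^^ (Suc n - k)) g))" for k
  have "(?D ^^ Suc n) (multE f g) =
     (\<Sum>k\<le>n. smultE (qbinom n k) (?D (multE ((?D ^^ k) f) ((upE ^^ k) ((?D ^^ (n - k)) g)))))"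
    by (simp add: Suc.IH qD_sum qD_smult)
  also have "\<dots> = (\<Sum>k\<le>n. smultE (qbinom n k) (T (Suc k))) + (\<Sum>k\<le>n. smultE (qbinom n k * qvar ^ k) (T k))"
  proof -
    have "?D (multE ((?D ^^ k) f) ((upE ^^ k) ((?D ^^ (n - k)) g))) =
        T (Suc k) + smultE (qvar ^ k) (T k)" if "k \<in> {..n}" for k
    proof -
      have "Suc n - k = Suc (n - k)" using that by simp
      then show ?thesis
        by (simp add: T_def leibniz qD_upk[OF ql] multE_smult_right)
    qed
    then show ?thesis
      by (simp add: smultE_add sum.distrib)
  qed
  also have "(\<Sum>k\<le>n. smultE (qbinom n k) (T (Suc k))) =
      (\<Sum>k\<le>Suc n. smultE (if k = 0 then 0 else qbinom n (k - 1)) (T k))"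
    by (subst sum.atMost_Suc_shift) simp
  also have "(\<Sum>k\<le>n. smultE (qbinom n k * qvar ^ k) (T k)) =
      (\<Sum>k\<le>Suc n. smultE (if k = Suc n then 0 else qbinom n k * qvar ^ k) (T k))"
    by (simp add: sum.atMost_Suc)
  also have "(\<Sum>k\<le>Suc n. smultE (if k = 0 then 0 else qbinom n (k - 1)) (T k)) +
      (\<Sum>k\<le>Suc n. smultE (if k = Suc n then 0 else qbinom n k * qvar ^ k) (T k)) =
      (\<Sum>k\<le>Suc n. smultE (qbinom (Suc n) k) (T k))"
    unfolding sum.distrib[symmetric]
  proof (rule sum.cong)
    fix k assume "k \<in> {..Suc n}"
    then have k: "k \<le> Suc n" by simp
    have "(if k = 0 then 0 else qbinom n (k - 1)) + (if k = Suc n then 0 else qbinom n k * qvar ^ k)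
        = qbinom (Suc n) k"
    proof (cases "k = 0")
      case True
      then show ?thesis by (simp add: qbinom_0)
    next
      case False
      show ?thesis
      proof (cases "k = Suc n")
        case True
        then show ?thesis by (simp add: qbinom_nn)
      next
        case False2: False
        then show ?thesis using False k by (simp add: qbinom_rec mult.commute)
      qed
    qed
    note cc = this
    show "smultE (if k = 0 then 0 else qbinom n (k - 1)) (T k) +
        smultE (if k = Suc n then 0 else qbinom n k * qvar ^ k) (T k) = smultE (qbinom (Suc n) k) (T k)"
      by (simp only: smultE_add_left[symmetric] cc)
  qed simp
  finally show ?case by (simp add: T_def)
qed


theorem proposition4p7:
  fixes R :: "'s \<times> nat \<Rightarrow> ('s, 'k::{comm_ring_1, ring_char_0}) E"
    and \<rho> :: "('s, 'k) E \<Rightarrow> ('s, 'k) E"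
    and f g :: "('s, 'k) E"
    and n :: nat
  assumes "\<forall>x. inE (R x)"
    and "q_linear R \<rho>"
    and "n \<ge> 1"
    and "inE f" and "inE g"
  shows "(qderiv R \<rho> ^^ n) (multE f g) =
    (\<Sum>k=0..n. smultE (qbinom n k)
       (multE ((qderiv R \<rho> ^^ k) f) ((upE ^^ k) ((qderiv R \<rho> ^^ (n - k)) g))))"
proof -
  have rho: "\<rho> = (\<lambda>x. x)" and ql: "\<forall>s i. R (s, Suc i) = smultE qvar (upE (R (s, i)))"
    using assms(2) by (auto simp: q_linear_def id_def)
  show ?thesis
    unfolding rho atLeast0AtMost by (rule main_qleibniz[OF ql])
qed

end
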